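(* For $n\in\mathbb{N}$ and $q>0$, let $P_n^{\mathrm{LR}^-;q}$ be the probability measure on the symmetric group $S_n$ given by $$P_n^{\mathrm{LR}^-;q}(\sigma)=\frac{q^{\mathrm{LR}^-_n(\sigma)}}{q(q+1)\cdots(q+n-1)},\qquad \sigma\in S_n,$$ where $\mathrm{LR}^-_n(\sigma)=|\{j\in[n]:\sigma_j=\min\{\sigma_i:1\le i\le j\}\}|$ is the number of left-to-right minima of $\sigma=\sigma_1\sigma_2\cdots\sigma_n$. Let $E_n^{\mathrm{LR}^-;q}$ denote expectation with respect to $P_n^{\mathrm{LR}^-;q}$, and let $\{q_n\}_{n=1}^\infty$ be a sequence of positive numbers. Then: (i) If $q_n=o(\frac1{\log n})$, then $\lim_{n\to\infty}E_n^{\mathrm{LR}^-;q_n}\mathrm{LR}^-_n=1$. (ii) If $\lim_{n\to\infty}q_n\log n=c\in(0,\infty)$, then $\lim_{n\to\infty}E_n^{\mathrm{LR}^-;q_n}\mathrm{LR}^-_n=1+c$. (iii) If $\lim_{n\to\infty}q_n\log n=\infty$ and $q_n=O(1)$, then $E_n^{\mathrm{LR}^-;q_n}\mathrm{LR}^-_n\sim q_n\log n$. (iv) If $q_n\to\infty$ and $q_n=o(n)$, then $E_n^{\mathrm{LR}^-;q_n}\mathrm{LR}^-_n\sim q_n\log\frac{n+q_n}{1+q_n}$. In particular, if $q_n\sim cn^\alpha$ with $c>0$ and $\alpha\in(0,1)$, then $E_n^{\mathrm{LR}^-;q_n}\mathrm{LR}^-_n\sim c(1-\alpha)n^\alpha\log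 n$. (v) If $q_n\sim cn$ with $c>0$, then $E_n^{\mathrm{LR}^-;q_n}\mathrm{LR}^-_n\sim c\big(\log\frac{1+c}{c}\big)n$; moreover $c\log\frac{1+c}{c}\to 0$ as $c\to0$ and $c\log\frac{1+c}{c}\to1$ as $c\to\infty$. (vi) If $\lim_{n\to\infty}\frac{q_n}{n}=\infty$, then $E_n^{\mathrm{LR}^-;q_n}\mathrm{LR}^-_n\sim n$.
   Context: $[n]=\{1,\dots,n\}$. For sequences $a_n,b_n$, $a_n\sim b_n$ means $a_n/b_n\to1$ as $n\to\infty$. *)

theory Defs
  imports "HOL-Analysis.Analysis" "HOL-Combinatorics.Permutations" "HOL-Library.Landau_Symbols"
begin

definition perms :: "nat \<Rightarrow> (nat \<Rightarrow> nat) set" where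
  "perms n = {\<sigma>. \<sigma> permutes {1..n}}"

definition LRmin :: "nat \<Rightarrow> (nat \<Rightarrow> nat) \<Rightarrow> nat" where
  "LRmin n \<sigma> = card {j \<in> {1..n}. \<sigma> j = Min (\<sigma> ` {1..j})}"

definition P_LR :: "nat \<Rightarrow> real \<Rightarrow> (nat \<Rightarrow> nat) \<Rightarrow> real" where
  "P_LR n q \<sigma> = q ^ LRmin n \<sigma> / pochhammer q n"

definition E_LR :: "nat \<Rightarrow> real \<Rightarrow> real" where
  "E_LR n q = (\<Sum>\<sigma>\<in>perms n. real (LRmin n \<sigma>) * P_LR n q \<sigma>)"

end

theory Submission
  imports Defs "HOL-Real_Asymp.Real_Asymp"
begin


definition fsh :: "nat \<Rightarrow> nat \<Rightarrow> nat" where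
  "fsh v t = (if v \<le> t then t + 1 else t)"

lemma fsh_le_iff[simp]: "fsh v a \<le> fsh v b \<longleftrightarrow> a \<le> b"
  by (auto simp: fsh_def)

lemma fsh_eq_iff[simp]: "fsh v a = fsh v b \<longleftrightarrow> a = b"
  by (auto simp: fsh_def)

definition Phi :: "nat \<Rightarrow> (nat \<Rightarrow> nat) \<Rightarrow> nat \<Rightarrow> (nat \<Rightarrow> nat)" where
  "Phi n \<tau> v = (\<lambda>i. if i \<in> {1..n} then fsh v (\<tau> i) else if i = Suc n then v else i)"

lemma LR_iff:
  fixes \<sigma> :: "nat \<Rightarrow> nat" and j :: nat
  assumes "j \<ge> 1"
  shows "\<sigma> j = Min (\<sigma> ` {1..j}) \<longleftrightarrow> (\<forall>i\<in>{1..j}. \<sigma> j \<le> \<sigma> i)"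
proof -
  have "Min (\<sigma> ` {1..j}) = \<sigma> j \<longleftrightarrow> \<sigma> j \<in> \<sigma> ` {1..j} \<and> (\<forall>a\<in>\<sigma> ` {1..j}. \<sigma> j \<le> a)"
    by (rule Min_eq_iff) (use assms in auto)
  then show ?thesis using assms by auto
qed

lemma Phi_permutes:
  assumes "\<tau> permutes {1..n}" "v \<in> {1..Suc n}"
  shows "Phi n \<tau> v permutes {1..Suc n}"
proof (rule bij_imp_permutes)
  let ?s = "Phi n \<tau> v"
  have img: "?s ` {1..Suc n} \<subseteq> {1..Suc n}"
  proof
    fix y assume "y \<in> ?s ` {1..Suc n}"
    then obtain i where i: "i \<in> {1..Suc n}" "y = ?s i" by auto
    show "y \<in> {1..Suc n}"
    proof (cases "i \<in> {1..n}")
      case True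
      then have "\<tau> i \<in> {1..n}" using permutes_in_image[OF assms(1)] by auto
      then show ?thesis using True i by (auto simp: Phi_def fsh_def)
    next
      case False
      then show ?thesis using i assms(2) by (auto simp: Phi_def)
    qed
  qed
  have inj: "inj_on ?s {1..Suc n}"
  proof (rule inj_onI)
    fix x y assume x: "x \<in> {1..Suc n}" and y: "y \<in> {1..Suc n}" and e: "?s x = ?s y"
    have ne: "fsh v t \<noteq> v" "v \<noteq> fsh v t" for t by (auto simp: fsh_def)
    show "x = y"
    proof (cases "x \<in> {1..n}"; cases "y \<in> {1..n}")
      assume "x \<in> {1..n}" "y \<in> {1..n}"
      then show ?thesis using e permutes_inj[OF assms(1)] by (auto simp: Phi_def inj_def)
    qed (use x y e ne in \<open>auto simp: Phi_def\<close>)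
  qed
  show "bij_betw ?s {1..Suc n} {1..Suc n}"
    using endo_inj_surj[OF _ img inj] inj by (auto simp: bij_betw_def)
  show "\<And>x. x \<notin> {1..Suc n} \<Longrightarrow> ?s x = x" by (auto simp: Phi_def)
qed

lemma Phi_inj0:
  assumes "\<tau> permutes {1..n}" "\<tau>' permutes {1..n}" and e: "Phi n \<tau> v = Phi n \<tau>' v'"
  shows "\<tau> = \<tau>' \<and> v = v'"
proof -
  from fun_cong[OF e, of "Suc n"] have v: "v = v'" by (simp add: Phi_def)
  have "\<tau> i = \<tau>' i" for i
  proof (cases "i \<in> {1..n}")
    case True
    then show ?thesis using fun_cong[OF e, of i] v by (simp add: Phi_def)
  next
    case False
    then show ?thesis using assms permutes_not_in[of \<tau> "{1..n}" i] permutes_not_in[of \<tau>' "{1..n}" i]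
      by auto
  qed
  then show "\<tau> = \<tau>' \<and> v = v'" using v by auto
qed

lemma Phi_inj:
  "inj_on (\<lambda>(\<tau>, v). Phi n \<tau> v) (perms n \<times> {1..Suc n})"
proof (rule inj_onI)
  fix x y assume "x \<in> perms n \<times> {1..Suc n}" "y \<in> perms n \<times> {1..Suc n}"
    "(case x of (\<tau>, v) \<Rightarrow> Phi n \<tau> v) = (case y of (\<tau>, v) \<Rightarrow> Phi n \<tau> v)"
  then show "x = y" using Phi_inj0[of "fst x" n "fst y" "snd x" "snd y"]
    by (cases x; cases y) (auto simp: perms_def)
qed

lemma Phi_image:
  "(\<lambda>(\<tau>, v). Phi n \<tau> v) ` (perms n \<times> {1..Suc n}) = perms (Suc n)"
proof (rule card_subset_eq)
  show "finite (perms (Suc n))" by (simp add: perms_def finite_permutations)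
  show "(\<lambda>(\<tau>, v). Phi n \<tau> v) ` (perms n \<times> {1..Suc n}) \<subseteq> perms (Suc n)"
    using Phi_permutes by (auto simp: perms_def)
  have "card ((\<lambda>(\<tau>, v). Phi n \<tau> v) ` (perms n \<times> {1..Suc n})) = card (perms n \<times> {1..Suc n})"
    by (rule card_image[OF Phi_inj])
  also have "\<dots> = fact n * Suc n"
    by (simp add: card_cartesian_product perms_def card_permutations)
  also have "\<dots> = card (perms (Suc n))"
    by (simp add: perms_def card_permutations)
  finally show "card ((\<lambda>(\<tau>, v). Phi n \<tau> v) ` (perms n \<times> {1..Suc n})) = card (perms (Suc n))" .
qed

lemma LR_Phi:
  assumes "\<tau> permutes {1..n}" "v \<in> {1..Suc n}"
  shows "LRmin (Suc n) (Phi n \<tau> v) = LRmin n \<tau> + (if v = 1 then 1 else 0)"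
proof -
  let ?s = "Phi n \<tau> v"
  have A: "{j \<in> {1..n}. ?s j = Min (?s ` {1..j})} = {j \<in> {1..n}. \<tau> j = Min (\<tau> ` {1..j})}"
  proof -
    have "?s j = Min (?s ` {1..j}) \<longleftrightarrow> \<tau> j = Min (\<tau> ` {1..j})" if j: "j \<in> {1..n}" for j
    proof -
      have "?s j = Min (?s ` {1..j}) \<longleftrightarrow> (\<forall>i\<in>{1..j}. ?s j \<le> ?s i)" using j by (intro LR_iff) auto
      also have "\<dots> \<longleftrightarrow> (\<forall>i\<in>{1..j}. \<tau> j \<le> \<tau> i)" using j by (auto simp: Phi_def)
      also have "\<dots> \<longleftrightarrow> \<tau> j = Min (\<tau> ` {1..j})" using j by (intro LR_iff[symmetric]) auto
      finally show ?thesis .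
    qed
    then show ?thesis by auto
  qed
  have B: "?s (Suc n) = Min (?s ` {1..Suc n}) \<longleftrightarrow> v = 1"
  proof -
    have "?s (Suc n) = Min (?s ` {1..Suc n}) \<longleftrightarrow> (\<forall>i\<in>{1..Suc n}. ?s (Suc n) \<le> ?s i)"
      by (intro LR_iff) auto
    also have "\<dots> \<longleftrightarrow> v = 1"
    proof
      assume h: "\<forall>i\<in>{1..Suc n}. ?s (Suc n) \<le> ?s i"
      show "v = 1"
      proof (cases "n = 0")
        case True then show ?thesis using assms(2) by auto
      next
        case False
        then have "1 \<in> {1..n}" by auto
        then obtain i where i: "i \<in> {1..n}" "\<tau> i = 1"
          using permutes_image[OF assms(1)] by (metis imageE)
        have "?s (Suc n) \<le> ?s i" using h i by auto
        then have "v \<le> ?s i" by (simp add: Phi_def)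
        then have "v \<le> fsh v 1" using i by (auto simp: Phi_def)
        then show ?thesis using assms(2) by (auto simp: fsh_def split: if_splits)
      qed
    next
      assume v: "v = 1"
      show "\<forall>i\<in>{1..Suc n}. ?s (Suc n) \<le> ?s i"
      proof
        fix i assume i: "i \<in> {1..Suc n}"
        show "?s (Suc n) \<le> ?s i"
        proof (cases "i \<in> {1..n}")
          case True
          then have "\<tau> i \<in> {1..n}" using permutes_in_image[OF assms(1)] by auto
          then show ?thesis using True v by (auto simp: Phi_def fsh_def)
        qed (use i v in \<open>auto simp: Phi_def\<close>)
      qed
    qed
    finally show ?thesis .
  qed
  have split: "{j \<in> {1..Suc n}. ?s j = Min (?s ` {1..j})} =
     {j \<in> {1..n}. ?s j = Min (?s ` {1..j})} \<union> (if v = 1 then {Suc n} else {})"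
    using B by (auto simp: le_Suc_eq)
  show ?thesis
    unfolding LRmin_def split A by (auto simp: card_insert_if)
qed

lemma sum_perms_Suc:
  fixes h :: "nat \<Rightarrow> real"
  shows "(\<Sum>\<sigma>\<in>perms (Suc n). h (LRmin (Suc n) \<sigma>)) =
         (\<Sum>\<tau>\<in>perms n. h (LRmin n \<tau> + 1) + real n * h (LRmin n \<tau>))"
proof -
  have "(\<Sum>\<sigma>\<in>perms (Suc n). h (LRmin (Suc n) \<sigma>)) =
        (\<Sum>x\<in>perms n \<times> {1..Suc n}. h (LRmin (Suc n) ((\<lambda>(\<tau>, v). Phi n \<tau> v) x)))"
    by (subst Phi_image[symmetric], subst sum.reindex[OF Phi_inj]) simp
  also have "\<dots> = (\<Sum>\<tau>\<in>perms n. \<Sum>v\<in>{1..Suc n}. h (LRmin (Suc n) (Phi n \<tau> v)))"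
    by (subst sum.cartesian_product) (auto intro!: sum.cong)
  also have "\<dots> = (\<Sum>\<tau>\<in>perms n. \<Sum>v\<in>{1..Suc n}. h (LRmin n \<tau> + (if v = 1 then 1 else 0)))"
    by (intro sum.cong refl, subst LR_Phi) (auto simp: perms_def)
  also have "\<dots> = (\<Sum>\<tau>\<in>perms n. h (LRmin n \<tau> + 1) + real n * h (LRmin n \<tau>))"
  proof (intro sum.cong refl)
    fix \<tau>
    have "{1..Suc n} = insert 1 {2..Suc n}" by auto
    then show "(\<Sum>v\<in>{1..Suc n}. h (LRmin n \<tau> + (if v = 1 then 1 else 0))) =
               h (LRmin n \<tau> + 1) + real n * h (LRmin n \<tau>)"
      by simp
  qed
  finally show ?thesis .
qed

lemma perms_0: "perms 0 = {id}" by (simp add: perms_def)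

lemma LRmin_0: "LRmin 0 \<sigma> = 0" by (simp add: LRmin_def)

lemma sumA: "(\<Sum>\<sigma>\<in>perms n. (x::real) ^ LRmin n \<sigma>) = pochhammer x n"
proof (induction n)
  case 0 then show ?case by (simp add: perms_0 LRmin_0)
next
  case (Suc n)
  have "(\<Sum>\<sigma>\<in>perms (Suc n). x ^ LRmin (Suc n) \<sigma>) = (\<Sum>\<tau>\<in>perms n. x ^ LRmin n \<tau> * (x + real n))"
    by (subst sum_perms_Suc[of "\<lambda>k. x ^ k"]) (auto intro!: sum.cong simp: algebra_simps)
  also have "\<dots> = pochhammer x (Suc n)" using Suc by (simp add: sum_distrib_right[symmetric] pochhammer_Suc)
  finally show ?case .
qed

lemma sumB: "(\<Sum>\<sigma>\<in>perms n. real (LRmin n \<sigma>) * (x::real) ^ LRmin n \<sigma>) = pochhammer x n * (\<Sum>j<n. x / (x + real j))"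
  if "x > 0"
proof (induction n)
  case 0 then show ?case by (simp add: perms_0 LRmin_0)
next
  case (Suc n)
  have "(\<Sum>\<sigma>\<in>perms (Suc n). real (LRmin (Suc n) \<sigma>) * x ^ LRmin (Suc n) \<sigma>) =
     (\<Sum>\<tau>\<in>perms n. (real (LRmin n \<tau>) * x ^ LRmin n \<tau>) * (x + real n) + x * x ^ LRmin n \<tau>)"
    by (subst sum_perms_Suc[of "\<lambda>k. real k * x ^ k"]) (auto intro!: sum.cong simp: algebra_simps)
  also have "\<dots> = pochhammer x n * (\<Sum>j<n. x / (x + real j)) * (x + real n) + x * pochhammer x n"
    using Suc by (simp add: sum.distrib sum_distrib_right[symmetric] sum_distrib_left[symmetric] sumA)
  also have "\<dots> = pochhammer x (Suc n) * (\<Sum>j<Suc n. x / (x + real j))"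
    using that by (simp add: pochhammer_Suc field_simps)
  finally show ?case .
qed

lemma E_LR_formula: "x > 0 \<Longrightarrow> E_LR n x = (\<Sum>j<n. x / (x + real j))"
proof -
  assume x: "x > 0"
  have p: "pochhammer x n \<noteq> 0" using x by (simp add: pochhammer_eq_0_iff)
  have "E_LR n x = (\<Sum>\<sigma>\<in>perms n. real (LRmin n \<sigma>) * x ^ LRmin n \<sigma>) / pochhammer x n"
    by (simp add: E_LR_def P_LR_def sum_divide_distrib)
  then show ?thesis using sumB[OF x] p by simp
qed



lemma ln_step_lower: "(y::real) > 0 \<Longrightarrow> 1 / (y + 1) \<le> ln (y + 1) - ln y"
proof -
  assume y: "y > 0"
  have "ln (y / (y + 1)) \<le> y / (y + 1) - 1" using y by (intro ln_le_minus_one) auto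
  also have "y / (y + 1) - 1 = - (1 / (y + 1))" using y by (simp add: field_simps)
  finally show ?thesis using y by (simp add: ln_div)
qed

lemma ln_step_upper: "(y::real) > 0 \<Longrightarrow> ln (y + 1) - ln y \<le> 1 / y"
proof -
  assume y: "y > 0"
  have "ln ((y + 1) / y) \<le> (y + 1) / y - 1" using y by (intro ln_le_minus_one) auto
  also have "(y + 1) / y - 1 = 1 / y" using y by (simp add: field_simps)
  finally show ?thesis using y by (simp add: ln_div)
qed

lemma LB: "(q::real) > 0 \<Longrightarrow> ln (q + real n) - ln q \<le> (\<Sum>j<n. 1 / (q + real j))"
proof (induction n)
  case 0 then show ?case by simp
next
  case (Suc n)
  have "ln (q + real n + 1) - ln (q + real n) \<le> 1 / (q + real n)"
    using Suc.prems by (intro ln_step_upper) auto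
  moreover have "q + real n + 1 = q + real (Suc n)" by simp
  ultimately show ?case using Suc.IH[OF Suc.prems] by (simp only: sum.lessThan_Suc)
qed

lemma UB: "(q::real) > 0 \<Longrightarrow> (\<Sum>j<Suc m. 1 / (q + real j)) \<le> 1 / q + ln (q + real m) - ln q"
proof (induction m)
  case 0 then show ?case by simp
next
  case (Suc m)
  have "1 / (q + real m + 1) \<le> ln (q + real m + 1) - ln (q + real m)"
    using Suc.prems by (intro ln_step_lower) auto
  moreover have "q + real m + 1 = q + real (Suc m)" by simp
  ultimately show ?case using Suc.IH[OF Suc.prems] by (simp only: sum.lessThan_Suc[of _ "Suc m"])
qed

definition S :: "nat \<Rightarrow> real \<Rightarrow> real" where
  "S n q = (\<Sum>j<n. q / (q + real j))"

lemma S_Suc_shift: "q > 0 \<Longrightarrow> S (Suc m) q = 1 + q * (\<Sum>j<m. 1 / ((q + 1) + real j))"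
  unfolding S_def by (subst sum.lessThan_Suc_shift) (simp add: sum_distrib_left add_ac)

lemma S_eq: "S n q = q * (\<Sum>j<n. 1 / (q + real j))"
  unfolding S_def by (simp add: sum_distrib_left)

lemma bound_A:
  assumes "n \<ge> 1" "q > 0"
  shows "S n q \<le> 1 + q * (1 + ln (real n))"
proof -
  obtain m where n: "n = Suc m" using assms by (cases n) auto
  have "(\<Sum>j<m. 1 / ((q + 1) + real j)) \<le> 1 + ln (real n)"
  proof (cases m)
    case 0 then show ?thesis using n by simp
  next
    case (Suc k)
    have "(\<Sum>j<m. 1 / ((q + 1) + real j)) \<le> (\<Sum>j<m. 1 / (1 + real j))"
      using assms by (intro sum_mono divide_left_mono) auto
    also have "\<dots> \<le> 1 / 1 + ln (1 + real k) - ln 1" unfolding Suc by (rule UB) simp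
    also have "\<dots> \<le> 1 + ln (real n)" using n Suc by simp
    finally show ?thesis .
  qed
  then have "q * (\<Sum>j<m. 1 / ((q + 1) + real j)) \<le> q * (1 + ln (real n))"
    using assms by (intro mult_left_mono) auto
  then show ?thesis using S_Suc_shift[OF assms(2), of m] n by simp
qed

lemma bound_B:
  assumes "n \<ge> 1" "q > 0"
  shows "S n q \<ge> 1 + q * (ln (q + real n) - ln (q + 1))"
proof -
  obtain m where n: "n = Suc m" using assms by (cases n) auto
  have "ln ((q + 1) + real m) - ln (q + 1) \<le> (\<Sum>j<m. 1 / ((q + 1) + real j))"
    using assms by (intro LB) auto
  then have "q * (ln ((q + 1) + real m) - ln (q + 1)) \<le> q * (\<Sum>j<m. 1 / ((q + 1) + real j))"
    using assms by (intro mult_left_mono) auto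
  then show ?thesis using S_Suc_shift[OF assms(2), of m] n by (simp add: add_ac)
qed

lemma bound_C1:
  assumes "q > 0"
  shows "q * (ln (q + real n) - ln q) \<le> S n q"
  unfolding S_eq using LB[OF assms, of n] assms by (intro mult_left_mono) auto

lemma bound_C2:
  assumes "n \<ge> 1" "q > 0"
  shows "S n q \<le> 1 + q * (ln (q + real n) - ln q)"
proof -
  obtain m where n: "n = Suc m" using assms by (cases n) auto
  have "(\<Sum>j<n. 1 / (q + real j)) \<le> 1 / q + ln (q + real m) - ln q" unfolding n by (rule UB[OF assms(2)])
  also have "\<dots> \<le> 1 / q + ln (q + real n) - ln q" using n assms by simp
  finally have "q * (\<Sum>j<n. 1 / (q + real j)) \<le> q * (1 / q + ln (q + real n) - ln q)"
    using assms by (intro mult_left_mono) auto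
  then show ?thesis unfolding S_eq using assms by (simp add: algebra_simps)
qed

lemma bound_D:
  assumes "q > 0"
  shows "real n * (q / (q + real n)) \<le> S n q" "S n q \<le> real n"
proof -
  have "(\<Sum>j<n. q / (q + real n)) \<le> S n q" unfolding S_def
    using assms by (intro sum_mono divide_left_mono) auto
  then show "real n * (q / (q + real n)) \<le> S n q" by simp
  have "S n q \<le> (\<Sum>j<n. 1)" unfolding S_def
    using assms by (intro sum_mono) auto
  then show "S n q \<le> real n" by simp
qed

lemma E_S: "q > 0 \<Longrightarrow> E_LR n q = S n q"
  by (simp add: E_LR_formula S_def)



lemma lnn_top: "filterlim (\<lambda>n. ln (real n)) at_top sequentially"
  by real_asymp

lemma powr_top: "(a::real) > 0 \<Longrightarrow> filterlim (\<lambda>n. real n powr a) at_top sequentially"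
  by real_asymp

lemma limc0: "filterlim (\<lambda>c::real. c * ln ((1 + c) / c)) (nhds 0) (at_right 0)"
  by real_asymp

lemma limcinf: "filterlim (\<lambda>c::real. c * ln ((1 + c) / c)) (nhds 1) at_top"
  by real_asymp

lemma lnn_inv0: "((\<lambda>n. inverse (ln (real n))) \<longlongrightarrow> 0) sequentially"
  by (rule tendsto_inverse_0_at_top[OF lnn_top])

lemma evE:
  assumes pos: "\<And>n. n \<ge> 1 \<Longrightarrow> q n > 0"
  shows "eventually (\<lambda>n. E_LR n (q n) = S n (q n)) sequentially"
  using eventually_ge_at_top[of 1] by eventually_elim (simp add: E_S pos)

lemma ratio_sandwich:
  fixes f g lo hi :: "nat \<Rightarrow> real"
  assumes ev: "eventually (\<lambda>n. g n > 0 \<and> g n * lo n \<le> f n \<and> f n \<le> g n * hi n) sequentially"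
    and lo: "lo \<longlonglongrightarrow> 1" and hi: "hi \<longlonglongrightarrow> 1"
  shows "f \<sim>[sequentially] g"
proof (rule asymp_equivI')
  have "eventually (\<lambda>n. lo n \<le> f n / g n \<and> f n / g n \<le> hi n) sequentially"
    using ev by eventually_elim (auto simp: pos_le_divide_eq pos_divide_le_eq mult.commute)
  then show "(\<lambda>n. f n / g n) \<longlonglongrightarrow> 1"
    by (intro tendsto_sandwich[OF _ _ lo hi]) (auto elim: eventually_mono)
qed

lemma q_to_0:
  fixes q :: "nat \<Rightarrow> real"
  assumes "(\<lambda>n. q n * ln (real n)) \<longlonglongrightarrow> c"
  shows "q \<longlonglongrightarrow> 0"
proof -
  have "(\<lambda>n. (q n * ln (real n)) / ln (real n)) \<longlonglongrightarrow> 0"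
    by (rule tendsto_divide_0[OF assms filterlim_at_top_imp_at_infinity[OF lnn_top]])
  moreover have "eventually (\<lambda>n. (q n * ln (real n)) / ln (real n) = q n) sequentially"
    using eventually_ge_at_top[of 2] by eventually_elim auto
  ultimately show ?thesis by (rule Lim_transform_eventually)
qed

lemma part12:
  fixes q :: "nat \<Rightarrow> real"
  assumes pos: "\<And>n. n \<ge> 1 \<Longrightarrow> q n > 0"
    and lim: "(\<lambda>n. q n * ln (real n)) \<longlonglongrightarrow> c"
  shows "(\<lambda>n. E_LR n (q n)) \<longlonglongrightarrow> 1 + c"
proof -
  have q0: "q \<longlonglongrightarrow> 0" by (rule q_to_0[OF lim])
  have evq: "eventually (\<lambda>n. E_LR n (q n) = S n (q n)) sequentially" using evE[of q] pos by blast
  have "(\<lambda>n. 1 + q n * ln (real n) - q n * ln (q n + 1)) \<longlonglongrightarrow> 1 + c - 0 * ln (0 + 1)"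
    by (intro tendsto_intros lim q0) auto
  then have lo: "(\<lambda>n. 1 + q n * ln (real n) - q n * ln (q n + 1)) \<longlonglongrightarrow> 1 + c" by simp
  have "(\<lambda>n. 1 + q n + q n * ln (real n)) \<longlonglongrightarrow> 1 + 0 + c"
    by (intro tendsto_intros lim q0)
  then have hi: "(\<lambda>n. 1 + q n + q n * ln (real n)) \<longlonglongrightarrow> 1 + c" by simp
  have ev: "eventually (\<lambda>n. 1 + q n * ln (real n) - q n * ln (q n + 1) \<le> E_LR n (q n) \<and>
              E_LR n (q n) \<le> 1 + q n + q n * ln (real n)) sequentially"
    using eventually_ge_at_top[of 1] evq
  proof eventually_elim
    case (elim n)
    have qp: "q n > 0" using pos elim by auto
    have "ln (real n) \<le> ln (q n + real n)" using qp elim by simp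
    then have "q n * ln (real n) \<le> q n * ln (q n + real n)" using qp by (intro mult_left_mono) auto
    moreover have "S n (q n) \<ge> 1 + q n * (ln (q n + real n) - ln (q n + 1))" using bound_B elim qp by auto
    moreover have "S n (q n) \<le> 1 + q n * (1 + ln (real n))" using bound_A elim qp by auto
    ultimately show ?case using elim by (simp add: algebra_simps add_ac)
  qed
  show ?thesis
    by (rule tendsto_sandwich[OF _ _ lo hi]) (use ev in \<open>auto elim: eventually_mono\<close>)
qed

lemma part3:
  fixes q :: "nat \<Rightarrow> real"
  assumes pos: "\<And>n. n \<ge> 1 \<Longrightarrow> q n > 0"
    and top: "filterlim (\<lambda>n. q n * ln (real n)) at_top sequentially"
    and bd: "q \<in> O(\<lambda>_. 1)"
  shows "(\<lambda>n. E_LR n (q n)) \<sim>[at_top] (\<lambda>n. q n * ln (real n))"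
proof -
  obtain M where M: "M > 0" "eventually (\<lambda>n. norm (q n) \<le> M * norm (1::real)) sequentially"
    using landau_o.bigE[OF bd] by blast
  have evq: "eventually (\<lambda>n. E_LR n (q n) = S n (q n)) sequentially" using evE[of q] pos by blast
  show ?thesis
  proof (rule ratio_sandwich[where lo = "\<lambda>n. 1 - ln (M + 1) * inverse (ln (real n))"
       and hi = "\<lambda>n. 1 + inverse (q n * ln (real n)) + inverse (ln (real n))"])
    show "(\<lambda>n. 1 - ln (M + 1) * inverse (ln (real n))) \<longlonglongrightarrow> 1"
      using tendsto_diff[OF tendsto_const tendsto_mult[OF tendsto_const lnn_inv0], of 1 "ln (M+1)"] by simp
    show "(\<lambda>n. 1 + inverse (q n * ln (real n)) + inverse (ln (real n))) \<longlonglongrightarrow> 1"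
      using tendsto_add[OF tendsto_add[OF tendsto_const tendsto_inverse_0_at_top[OF top]] lnn_inv0, of 1] by simp
    show "eventually (\<lambda>n. q n * ln (real n) > 0 \<and>
        q n * ln (real n) * (1 - ln (M + 1) * inverse (ln (real n))) \<le> E_LR n (q n) \<and>
        E_LR n (q n) \<le> q n * ln (real n) * (1 + inverse (q n * ln (real n)) + inverse (ln (real n)))) sequentially"
      using eventually_ge_at_top[of 2] evq M(2)
    proof eventually_elim
      case (elim n)
      have qp: "q n > 0" using pos elim by auto
      have ln0: "ln (real n) > 0" using elim by simp
      have qM: "q n \<le> M" using elim qp by simp
      have "ln (real n) \<le> ln (q n + real n)" using qp elim by simp
      then have a: "q n * ln (real n) \<le> q n * ln (q n + real n)" using qp by (intro mult_left_mono) auto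
      have "ln (q n + 1) \<le> ln (M + 1)" using qp qM by simp
      then have b: "q n * ln (q n + 1) \<le> q n * ln (M + 1)" using qp by (intro mult_left_mono) auto
      have c: "S n (q n) \<ge> 1 + q n * (ln (q n + real n) - ln (q n + 1))" using bound_B elim qp by auto
      have d: "S n (q n) \<le> 1 + q n * (1 + ln (real n))" using bound_A elim qp by auto
      have e1: "q n * ln (real n) * (1 - ln (M + 1) * inverse (ln (real n))) = q n * ln (real n) - q n * ln (M + 1)"
        using ln0 by (simp add: field_simps)
      have e2: "q n * ln (real n) * (1 + inverse (q n * ln (real n)) + inverse (ln (real n))) = q n * ln (real n) + 1 + q n"
        using ln0 qp by (simp add: field_simps)
      have "E_LR n (q n) = S n (q n)" using elim by simp
      then show ?case unfolding e1 e2 using a b c d qp ln0 by (simp only: mult_pos_pos) argo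
    qed
  qed
qed



lemma part4:
  fixes q :: "nat \<Rightarrow> real"
  assumes pos: "\<And>n. n \<ge> 1 \<Longrightarrow> q n > 0"
    and top: "filterlim q at_top sequentially"
    and sm: "q \<in> o(\<lambda>n. real n)"
  shows "(\<lambda>n. E_LR n (q n)) \<sim>[at_top] (\<lambda>n. q n * ln ((real n + q n) / (1 + q n)))"
proof -
  define g where "g n = q n * ln ((real n + q n) / (1 + q n))" for n
  have evq: "eventually (\<lambda>n. E_LR n (q n) = S n (q n)) sequentially" using evE[of q] pos by blast
  have q1: "eventually (\<lambda>n. 1 \<le> q n) sequentially" using top by (simp add: filterlim_at_top)
  have q4: "eventually (\<lambda>n. norm (q n) \<le> (1/4) * norm (real n)) sequentially"
    using landau_o.smallD[OF sm, of "1/4"] by simp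
  have glow: "eventually (\<lambda>n. ln 2 * q n \<le> g n) sequentially"
    using q1 q4 eventually_ge_at_top[of 1]
  proof eventually_elim
    case (elim n)
    have "2 \<le> (real n + q n) / (1 + q n)" using elim by (simp add: field_simps)
    then have "ln 2 \<le> ln ((real n + q n) / (1 + q n))" by simp
    then show ?case unfolding g_def using elim by (simp add: mult.commute)
  qed
  have gtop: "filterlim g at_top sequentially"
    by (rule filterlim_at_top_mono[OF filterlim_tendsto_pos_mult_at_top[OF tendsto_const _ top] glow]) simp
  have "(\<lambda>n. E_LR n (q n)) \<sim>[at_top] g"
  proof (rule ratio_sandwich[where lo = "\<lambda>_. 1" and hi = "\<lambda>n. 1 + 2 * inverse (g n)"])
    show "(\<lambda>n. 1::real) \<longlonglongrightarrow> 1" by simp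
    show "(\<lambda>n. 1 + 2 * inverse (g n)) \<longlonglongrightarrow> 1"
      using tendsto_add[OF tendsto_const tendsto_mult[OF tendsto_const tendsto_inverse_0_at_top[OF gtop]], of 1 2] by simp
    have gpos: "eventually (\<lambda>n. g n > 0) sequentially" using gtop by (simp add: filterlim_at_top_dense)
    show "eventually (\<lambda>n. g n > 0 \<and> g n * 1 \<le> E_LR n (q n) \<and> E_LR n (q n) \<le> g n * (1 + 2 * inverse (g n))) sequentially"
      using gpos evq eventually_ge_at_top[of 1]
    proof eventually_elim
      case (elim n)
      have qp: "q n > 0" using pos elim by auto
      have id: "g n = q n * (ln (q n + real n) - ln (q n)) - q n * (ln (q n + 1) - ln (q n))"
        unfolding g_def using qp by (simp add: ln_div algebra_simps)
      have r1: "q n * (ln (q n + 1) - ln (q n)) \<le> q n * (1 / q n)"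
        using ln_step_upper[OF qp] qp by (intro mult_left_mono) auto
      have r0: "0 \<le> q n * (ln (q n + 1) - ln (q n))" using qp by simp
      have c1: "q n * (ln (q n + real n) - ln (q n)) \<le> S n (q n)" by (rule bound_C1[OF qp])
      have c2: "S n (q n) \<le> 1 + q n * (ln (q n + real n) - ln (q n))" using bound_C2 elim qp by auto
      have e2: "g n * (1 + 2 * inverse (g n)) = g n + 2" using elim by (simp add: field_simps)
      have r1': "q n * (ln (q n + 1) - ln (q n)) \<le> 1" using r1 qp by simp
      have "E_LR n (q n) = S n (q n)" using elim by simp
      then have "g n \<le> E_LR n (q n)" "E_LR n (q n) \<le> g n + 2" using r1' r0 c1 c2 id by linarith+
      then show ?case unfolding e2 using elim by simp
    qed
  qed
  then show ?thesis unfolding g_def .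
qed



lemma equiv_ratio:
  fixes q g :: "nat \<Rightarrow> real"
  assumes "q \<sim>[at_top] g" "eventually (\<lambda>n. g n \<noteq> 0) sequentially"
  shows "(\<lambda>n. q n / g n) \<longlonglongrightarrow> 1"
proof -
  have "(\<lambda>n. if q n = 0 \<and> g n = 0 then 1 else q n / g n) \<longlonglongrightarrow> 1" by (rule asymp_equivD[OF assms(1)])
  moreover have "eventually (\<lambda>n. (if q n = 0 \<and> g n = 0 then 1 else q n / g n) = q n / g n) sequentially"
    using assms(2) by eventually_elim auto
  ultimately show ?thesis by (rule Lim_transform_eventually)
qed

lemma part4b:
  fixes q :: "nat \<Rightarrow> real"
  assumes pos: "\<And>n. n \<ge> 1 \<Longrightarrow> q n > 0"
    and c: "0 < c" and a0: "0 < \<alpha>" and a1: "\<alpha> < 1"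
    and eq: "q \<sim>[at_top] (\<lambda>n. c * real n powr \<alpha>)"
  shows "(\<lambda>n. E_LR n (q n)) \<sim>[at_top] (\<lambda>n. c * (1 - \<alpha>) * real n powr \<alpha> * ln (real n))"
proof -
  define h where "h n = q n / real n powr \<alpha>" for n
  have r1: "(\<lambda>n. q n / (c * real n powr \<alpha>)) \<longlonglongrightarrow> 1"
    by (rule equiv_ratio[OF eq]) (use eventually_ge_at_top[of 1] c in \<open>auto elim: eventually_mono\<close>)
  have "(\<lambda>n. c * (q n / (c * real n powr \<alpha>))) \<longlonglongrightarrow> c * 1" by (intro tendsto_intros r1)
  moreover have "(\<lambda>n. c * (q n / (c * real n powr \<alpha>))) = h" using c by (auto simp: h_def fun_eq_iff)
  ultimately have hlim: "h \<longlonglongrightarrow> c" by simp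
  have qeq: "eventually (\<lambda>n. h n * real n powr \<alpha> = q n) sequentially"
    using eventually_ge_at_top[of 1] by eventually_elim (auto simp: h_def)
  have qtop: "filterlim q at_top sequentially"
    by (rule filterlim_at_top_mono[OF filterlim_tendsto_pos_mult_at_top[OF hlim c powr_top[OF a0]]])
       (use qeq in \<open>auto elim: eventually_mono\<close>)
  have np: "(\<lambda>n. real n powr (\<alpha> - 1)) \<longlonglongrightarrow> 0"
    using tendsto_neg_powr[OF _ filterlim_real_sequentially] a1 by simp
  have "(\<lambda>n. h n * real n powr (\<alpha> - 1)) \<longlonglongrightarrow> c * 0" by (intro tendsto_intros hlim np)
  moreover have "eventually (\<lambda>n. h n * real n powr (\<alpha> - 1) = q n / real n) sequentially"
    using eventually_ge_at_top[of 1] by eventually_elim (auto simp: h_def powr_diff)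
  ultimately have qn0: "(\<lambda>n. q n / real n) \<longlonglongrightarrow> 0" using Lim_transform_eventually by fastforce
  have sm: "q \<in> o(\<lambda>n. real n)"
    by (rule smalloI_tendsto[OF qn0]) (use eventually_ge_at_top[of 1] in \<open>auto elim: eventually_mono\<close>)
  have E1: "(\<lambda>n. E_LR n (q n)) \<sim>[at_top] (\<lambda>n. q n * ln ((real n + q n) / (1 + q n)))"
    by (rule part4[OF pos qtop sm])
  define r where "r n = - ln (h n) + ln (1 + q n / real n) - ln (1 + inverse (q n))" for n
  have rlim: "r \<longlonglongrightarrow> - ln c + ln (1 + 0) - ln (1 + 0)"
    unfolding r_def using c by (intro tendsto_intros hlim qn0 tendsto_inverse_0_at_top[OF qtop]) auto
  have dtop: "filterlim (\<lambda>n. (1 - \<alpha>) * ln (real n)) at_top sequentially"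
    by (rule filterlim_tendsto_pos_mult_at_top[OF tendsto_const _ lnn_top]) (use a1 in simp)
  have "(\<lambda>n. 1 + r n / ((1 - \<alpha>) * ln (real n))) \<longlonglongrightarrow> 1 + 0"
    by (intro tendsto_intros tendsto_divide_0[OF rlim filterlim_at_top_imp_at_infinity[OF dtop]])
  moreover have "eventually (\<lambda>n. 1 + r n / ((1 - \<alpha>) * ln (real n)) =
       ln ((real n + q n) / (1 + q n)) / ((1 - \<alpha>) * ln (real n))) sequentially"
    using eventually_ge_at_top[of 2]
  proof eventually_elim
    case (elim n)
    have qp: "q n > 0" using pos elim by auto
    have np: "real n > 0" "ln (real n) > 0" using elim by auto
    have hp: "h n > 0" using qp np by (simp add: h_def)
    have l1: "ln (real n + q n) = ln (real n) + ln (1 + q n / real n)"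
    proof -
      have "real n + q n = real n * (1 + q n / real n)" using np by (simp add: field_simps)
      moreover have "q n / real n > 0" using qp np by simp
      then have "1 + q n / real n > 0" by linarith
      ultimately show ?thesis using np qp by (simp add: ln_mult)
    qed
    have l2: "ln (1 + q n) = ln (q n) + ln (1 + inverse (q n))"
    proof -
      have "1 + q n = q n * (1 + inverse (q n))" using qp by (simp add: field_simps)
      moreover have "inverse (q n) > 0" using qp by simp
      then have "1 + inverse (q n) > 0" by linarith
      ultimately show ?thesis using qp by (simp add: ln_mult)
    qed
    have l3: "ln (q n) = ln (h n) + \<alpha> * ln (real n)"
    proof -
      have "q n = h n * real n powr \<alpha>" using np by (simp add: h_def)
      then show ?thesis using hp np by (simp add: ln_mult)
    qed
    have "ln ((real n + q n) / (1 + q n)) = ln (real n + q n) - ln (1 + q n)"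
      using qp np by (simp add: ln_div)
    also have "\<dots> = (1 - \<alpha>) * ln (real n) + r n" unfolding l1 l2 l3 r_def by (simp add: algebra_simps)
    finally show ?case using np a1 by (simp add: field_simps)
  qed
  ultimately have "(\<lambda>n. ln ((real n + q n) / (1 + q n)) / ((1 - \<alpha>) * ln (real n))) \<longlonglongrightarrow> 1"
    using Lim_transform_eventually by fastforce
  then have lneq: "(\<lambda>n. ln ((real n + q n) / (1 + q n))) \<sim>[at_top] (\<lambda>n. (1 - \<alpha>) * ln (real n))"
    by (rule asymp_equivI')
  have "(\<lambda>n. q n * ln ((real n + q n) / (1 + q n))) \<sim>[at_top] (\<lambda>n. c * real n powr \<alpha> * ((1 - \<alpha>) * ln (real n)))"
    by (rule asymp_equiv_mult[OF eq lneq])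
  also have "(\<lambda>n. c * real n powr \<alpha> * ((1 - \<alpha>) * ln (real n))) = (\<lambda>n. c * (1 - \<alpha>) * real n powr \<alpha> * ln (real n))"
    by (auto simp: fun_eq_iff mult_ac)
  finally show ?thesis using E1 asymp_equiv_trans by blast
qed

lemma part5:
  fixes q :: "nat \<Rightarrow> real"
  assumes pos: "\<And>n. n \<ge> 1 \<Longrightarrow> q n > 0"
    and c: "0 < c"
    and eq: "q \<sim>[at_top] (\<lambda>n. c * real n)"
  shows "(\<lambda>n. E_LR n (q n)) \<sim>[at_top] (\<lambda>n. c * ln ((1 + c) / c) * real n)"
proof -
  define K where "K = c * ln ((1 + c) / c)"
  have K1: "ln ((1 + c) / c) = ln (1 + inverse c)" using c by (simp add: field_simps)
  have Kp: "K > 0" unfolding K_def using c by (simp add: field_simps)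
  have evq: "eventually (\<lambda>n. E_LR n (q n) = S n (q n)) sequentially" using evE[of q] pos by blast
  have r1: "(\<lambda>n. q n / (c * real n)) \<longlonglongrightarrow> 1"
    by (rule equiv_ratio[OF eq]) (use eventually_ge_at_top[of 1] c in \<open>auto elim: eventually_mono\<close>)
  have "(\<lambda>n. c * (q n / (c * real n))) \<longlonglongrightarrow> c * 1" by (intro tendsto_intros r1)
  moreover have "(\<lambda>n. c * (q n / (c * real n))) = (\<lambda>n. q n / real n)" using c by (auto simp: fun_eq_iff)
  ultimately have qn: "(\<lambda>n. q n / real n) \<longlonglongrightarrow> c" by simp
  define a where "a n = q n / real n * ln (1 + inverse (q n / real n))" for n
  have alim: "a \<longlonglongrightarrow> c * ln (1 + inverse c)"
  proof -
    have "1 + inverse c \<noteq> 0" using c by (smt (verit) inverse_positive_iff_positive)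
    then show ?thesis unfolding a_def using c by (intro tendsto_intros qn) auto
  qed
  have KK: "c * ln (1 + inverse c) = K" unfolding K_def K1 ..
  have alim': "(\<lambda>n. a n / K) \<longlonglongrightarrow> 1"
    using tendsto_divide[OF alim tendsto_const, of K] Kp unfolding KK by simp
  have blim': "(\<lambda>n. (inverse (real n) + a n) / K) \<longlonglongrightarrow> 1"
    using tendsto_divide[OF tendsto_add[OF tendsto_inverse_0_at_top[OF filterlim_real_sequentially] alim] tendsto_const, of K] Kp
    unfolding KK by simp
  have "(\<lambda>n. E_LR n (q n)) \<sim>[at_top] (\<lambda>n. K * real n)"
  proof (rule ratio_sandwich[OF _ alim' blim'])
    show "eventually (\<lambda>n. K * real n > 0 \<and> K * real n * (a n / K) \<le> E_LR n (q n) \<and>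
        E_LR n (q n) \<le> K * real n * ((inverse (real n) + a n) / K)) sequentially"
      using evq eventually_ge_at_top[of 1]
    proof eventually_elim
      case (elim n)
      have qp: "q n > 0" using pos elim by auto
      have np: "real n > 0" using elim by auto
      have "real n * a n = q n * (ln (q n + real n) - ln (q n))"
      proof -
        have "1 + inverse (q n / real n) = (q n + real n) / q n" using qp np by (simp add: field_simps)
        then show ?thesis unfolding a_def using qp np by (simp add: ln_div add_pos_pos)
      qed
      moreover have "q n * (ln (q n + real n) - ln (q n)) \<le> S n (q n)" by (rule bound_C1[OF qp])
      moreover have "S n (q n) \<le> 1 + q n * (ln (q n + real n) - ln (q n))" using bound_C2 elim qp by auto
      moreover have "K * real n * (a n / K) = real n * a n" using Kp by simp
      moreover have "K * real n * ((inverse (real n) + a n) / K) = 1 + real n * a n" using Kp np by (simp add: field_simps)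
      ultimately show ?case using elim Kp np by simp
    qed
  qed
  then show ?thesis unfolding K_def .
qed

lemma part6:
  fixes q :: "nat \<Rightarrow> real"
  assumes pos: "\<And>n. n \<ge> 1 \<Longrightarrow> q n > 0"
    and top: "filterlim (\<lambda>n. q n / real n) at_top sequentially"
  shows "(\<lambda>n. E_LR n (q n)) \<sim>[at_top] (\<lambda>n. real n)"
proof -
  have evq: "eventually (\<lambda>n. E_LR n (q n) = S n (q n)) sequentially" using evE[of q] pos by blast
  have lo: "(\<lambda>n. inverse (1 + inverse (q n / real n))) \<longlonglongrightarrow> 1"
    using tendsto_inverse[OF tendsto_add[OF tendsto_const tendsto_inverse_0_at_top[OF top]], of 1] by simp
  show ?thesis
  proof (rule ratio_sandwich[OF _ lo tendsto_const])
    show "eventually (\<lambda>n. real n > 0 \<and> real n * inverse (1 + inverse (q n / real n)) \<le> E_LR n (q n) \<and>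
        E_LR n (q n) \<le> real n * 1) sequentially"
      using evq eventually_ge_at_top[of 1]
    proof eventually_elim
      case (elim n)
      have qp: "q n > 0" using pos elim by auto
      have np: "real n > 0" using elim by auto
      have "inverse (1 + inverse (q n / real n)) = q n / (q n + real n)" using qp np by (simp add: field_simps)
      then show ?case using bound_D[OF qp, of n] elim np by simp
    qed
  qed
qed


theorem proposition1p1:
  fixes q :: "nat \<Rightarrow> real"
  assumes pos: "\<And>n. n \<ge> 1 \<Longrightarrow> q n > 0"
  shows
    "(q \<in> o(\<lambda>n. 1 / ln (real n)) \<longrightarrow> (\<lambda>n. E_LR n (q n)) \<longlonglongrightarrow> 1)
   \<and> (\<forall>c. 0 < c \<longrightarrow> (\<lambda>n. q n * ln (real n)) \<longlonglongrightarrow> c \<longrightarrow> (\<lambda>n. E_LR n (q n)) \<longlonglongrightarrow> 1 + c)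
   \<and> (filterlim (\<lambda>n. q n * ln (real n)) at_top sequentially \<and> q \<in> O(\<lambda>_. 1) \<longrightarrow>
        (\<lambda>n. E_LR n (q n)) \<sim>[at_top] (\<lambda>n. q n * ln (real n)))
   \<and> (filterlim q at_top sequentially \<and> q \<in> o(\<lambda>n. real n) \<longrightarrow>
        (\<lambda>n. E_LR n (q n)) \<sim>[at_top] (\<lambda>n. q n * ln ((real n + q n) / (1 + q n))))
   \<and> (\<forall>c \<alpha>. 0 < c \<and> 0 < \<alpha> \<and> \<alpha> < 1 \<and> q \<sim>[at_top] (\<lambda>n. c * real n powr \<alpha>) \<longrightarrow>
        (\<lambda>n. E_LR n (q n)) \<sim>[at_top] (\<lambda>n. c * (1 - \<alpha>) * real n powr \<alpha> * ln (real n)))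
   \<and> (\<forall>c. 0 < c \<and> q \<sim>[at_top] (\<lambda>n. c * real n) \<longrightarrow>
        (\<lambda>n. E_LR n (q n)) \<sim>[at_top] (\<lambda>n. c * ln ((1 + c) / c) * real n))
   \<and> filterlim (\<lambda>c::real. c * ln ((1 + c) / c)) (nhds 0) (at_right 0)
   \<and> filterlim (\<lambda>c::real. c * ln ((1 + c) / c)) (nhds 1) at_top
   \<and> (filterlim (\<lambda>n. q n / real n) at_top sequentially \<longrightarrow>
        (\<lambda>n. E_LR n (q n)) \<sim>[at_top] (\<lambda>n. real n))"
proof (intro conjI allI impI; (elim conjE)?)
  assume "q \<in> o(\<lambda>n. 1 / ln (real n))"
  from smalloD_tendsto[OF this] have "(\<lambda>n. q n * ln (real n)) \<longlonglongrightarrow> 0" by simp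
  from part12[OF pos this] show "(\<lambda>n. E_LR n (q n)) \<longlonglongrightarrow> 1" by simp
next
  fix c :: real
  assume "(\<lambda>n. q n * ln (real n)) \<longlonglongrightarrow> c"
  from part12[OF pos this] show "(\<lambda>n. E_LR n (q n)) \<longlonglongrightarrow> 1 + c" .
next
  assume "filterlim (\<lambda>n. q n * ln (real n)) at_top sequentially" "q \<in> O(\<lambda>_. 1)"
  from part3[OF pos this] show "(\<lambda>n. E_LR n (q n)) \<sim>[at_top] (\<lambda>n. q n * ln (real n))" .
next
  assume "filterlim q at_top sequentially" "q \<in> o(\<lambda>n. real n)"
  from part4[OF pos this] show "(\<lambda>n. E_LR n (q n)) \<sim>[at_top] (\<lambda>n. q n * ln ((real n + q n) / (1 + q n)))" .
next
  fix c \<alpha> :: real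
  assume "0 < c" "0 < \<alpha>" "\<alpha> < 1" "q \<sim>[at_top] (\<lambda>n. c * real n powr \<alpha>)"
  from part4b[OF pos this] show "(\<lambda>n. E_LR n (q n)) \<sim>[at_top] (\<lambda>n. c * (1 - \<alpha>) * real n powr \<alpha> * ln (real n))" .
next
  fix c :: real
  assume "0 < c" "q \<sim>[at_top] (\<lambda>n. c * real n)"
  from part5[OF pos this] show "(\<lambda>n. E_LR n (q n)) \<sim>[at_top] (\<lambda>n. c * ln ((1 + c) / c) * real n)" .
next
  show "filterlim (\<lambda>c::real. c * ln ((1 + c) / c)) (nhds 0) (at_right 0)" by (rule limc0)
next
  show "filterlim (\<lambda>c::real. c * ln ((1 + c) / c)) (nhds 1) at_top" by (rule limcinf)
next
  assume "filterlim (\<lambda>n. q n / real n) at_top sequentially"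
  from part6[OF pos this] show "(\<lambda>n. E_LR n (q n)) \<sim>[at_top] (\<lambda>n. real n)" .
qed

end
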